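(* The rule $R$ is a well-defined function $\Sigma^n\to\Sigma^n$: there is no $s\in\Sigma^n$ with $ICR_0(s)\in\mathrm{Reps}$, $ICR_1(s)\in\mathrm{Reps}$ and $ICR_0(s)\neq ICR_2(s)$ (in particular, if $k>2$ there is no $s$ with both $ICR_0(s),ICR_1(s)\in\mathrm{Reps}$).
   Context: Let $k\ge 2$, $\Sigma=\{0,\dots,k-1\}$ with arithmetic modulo $k$, $n\ge 1$, and $s=s[0]\cdots s[n-1]\in\Sigma^n$. For an integer $j$, $ICR_j(s)=s[1]\cdots s[n-1](s[0]+j)$; each $ICR_j$ is a bijection of $\Sigma^n$; $ICR=ICR_1$. Let $\mathbf N$ be the set of cycles (orbits) of the permutation $ICR_1$ of $\Sigma^n$; $orbit(s)$ is the cycle containing $s$. Let $\mathbf G$ be the directed graph on $\mathbf N$ with an arc $(\mathcal U,\mathcal V)$ iff some $s\in\mathcal U$ has $ICR_0(s)\in\mathcal V$. Let $\mathbf T$ be a directed spanning tree of $\mathbf G$ rooted at $\mathcal R\in\mathbf N$ (arcs from parent to child), with parent map $parent$ on $\mathbf N\setminus\{\mathcal R\}$; the depth of a cycle is its distance from the root (root has depth $0$). For each $\mathcal U\ne\mathcal R$, a representative $rep(\mathcal U)$ is a fixed node $s\in\mathcal U$ with $ICR_0^{-1}(s)\in parent(\mathcal U)$ and $s[n-1]\equiv \text{depth}(\mathcal U)\pmod k$ (such a node is assumed to exist and one is fixed). $\mathrm{Reps}$ is the set of all representatives. Define $R(s)=ICR_0(s)$ if $ICR_0(s)\in\mathrm{Reps}$;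 $R(s)=ICR_2(s)$ if $ICR_1(s)\in\mathrm{Reps}$; $R(s)=ICR_1(s)$ otherwise. *)

theory Defs
  imports Main
begin

definition words :: "nat \<Rightarrow> nat \<Rightarrow> nat list set" where
  "words k n = {s. length s = n \<and> set s \<subseteq> {0..<k}}"

definition icr :: "nat \<Rightarrow> nat \<Rightarrow> nat list \<Rightarrow> nat list" where
  "icr k j s = tl s @ [(hd s + j) mod k]"

definition orbit_icr :: "nat \<Rightarrow> nat list \<Rightarrow> nat list set" where
  "orbit_icr k s = {(icr k 1 ^^ m) s | m. True}"

definition cycles :: "nat \<Rightarrow> nat \<Rightarrow> nat list set set" where
  "cycles k n = orbit_icr k ` words k n"

definition arcG :: "nat \<Rightarrow> nat list set \<Rightarrow> nat list set \<Rightarrow> bool" where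
  "arcG k U V \<longleftrightarrow> (\<exists>s\<in>U. icr k 0 s \<in> V)"

text \<open>par is the parent map of a directed spanning tree of G (on the cycle set N)
  rooted at root, arcs from parent to child.\<close>
definition spanning_tree ::
  "nat \<Rightarrow> nat \<Rightarrow> nat list set \<Rightarrow> (nat list set \<Rightarrow> nat list set) \<Rightarrow> bool" where
  "spanning_tree k n root par \<longleftrightarrow>
     root \<in> cycles k n \<and>
     (\<forall>U \<in> cycles k n - {root}. par U \<in> cycles k n \<and> arcG k (par U) U) \<and>
     (\<forall>U \<in> cycles k n. \<exists>d. (par ^^ d) U = root)"

definition depth :: "nat list set \<Rightarrow> (nat list set \<Rightarrow> nat list set) \<Rightarrow> nat list set \<Rightarrow> nat" where
  "depth root par U = (LEAST d. (par ^^ d) U = root)"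

definition valid_reps ::
  "nat \<Rightarrow> nat \<Rightarrow> nat list set \<Rightarrow> (nat list set \<Rightarrow> nat list set)
     \<Rightarrow> (nat list set \<Rightarrow> nat list) \<Rightarrow> bool" where
  "valid_reps k n root par rep \<longleftrightarrow>
     (\<forall>U \<in> cycles k n - {root}.
        rep U \<in> U \<and>
        (\<exists>t \<in> par U. icr k 0 t = rep U) \<and>
        last (rep U) = depth root par U mod k)"

definition Reps ::
  "nat \<Rightarrow> nat \<Rightarrow> nat list set \<Rightarrow> (nat list set \<Rightarrow> nat list) \<Rightarrow> nat list set" where
  "Reps k n root rep = rep ` (cycles k n - {root})"

end

theory Submission
  imports Defs
begin

lemma icr_iter:
  assumes "m \<le> length s"
  shows "(icr k j ^^ m) s = drop m s @ map (\<lambda>x. (x+j) mod k) (take m s)"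
  using assms
proof (induction m)
  case 0
  then show ?case by simp
next
  case (Suc m)
  then have IH: "(icr k j ^^ m) s = drop m s @ map (\<lambda>x. (x+j) mod k) (take m s)" by simp
  have lt: "m < length s" using Suc.prems by simp
  have d: "drop m s = s ! m # drop (Suc m) s" using lt by (simp add: Cons_nth_drop_Suc)
  have "(icr k j ^^ Suc m) s = icr k j (drop m s @ map (\<lambda>x. (x+j) mod k) (take m s))"
    using IH by simp
  also have "\<dots> = drop (Suc m) s @ map (\<lambda>x. (x+j) mod k) (take (Suc m) s)"
    using lt by (simp add: d icr_def take_Suc_conv_app_nth)
  finally show ?case .
qed

lemma icr_iter_n:
  "(icr k j ^^ (length s)) s = map (\<lambda>x. (x+j) mod k) s"
  using icr_iter[of "length s" s k j] by simp

lemma icr_iter_ni: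
  assumes "set s \<subseteq> {0..<k}"
  shows "(icr k 1 ^^ (length s * i)) s = map (\<lambda>x. (x+i) mod k) s"
proof (induction i)
  case 0
  then show ?case using assms by (auto intro!: map_idI[symmetric])
next
  case (Suc i)
  have "(icr k 1 ^^ (length s * Suc i)) s = (icr k 1 ^^ (length s)) ((icr k 1 ^^ (length s * i)) s)"
    by (simp add: funpow_add)
  also have "\<dots> = (icr k 1 ^^ (length (map (\<lambda>x. (x+i) mod k) s))) (map (\<lambda>x. (x+i) mod k) s)"
    using Suc by simp
  also have "\<dots> = map (\<lambda>x. ((x+i) mod k + 1) mod k) s"
    by (subst icr_iter_n) simp
  also have "\<dots> = map (\<lambda>x. (x+Suc i) mod k) s"
    by (simp add: mod_Suc_eq)
  finally show ?case .
qed

lemma icr_period: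
  assumes "s \<in> words k n"
  shows "(icr k 1 ^^ (n * k)) s = s"
proof -
  have "length s = n" "set s \<subseteq> {0..<k}" using assms by (auto simp: words_def)
  then show ?thesis using icr_iter_ni[where s=s and i=k and k=k]
    by (auto intro!: map_idI)
qed

lemma icr_words:
  assumes "s \<in> words k n" "n \<ge> 1" "k \<ge> 1"
  shows "icr k j s \<in> words k n"
proof -
  have "s \<noteq> []" using assms by (auto simp: words_def)
  then show ?thesis using assms
    by (cases s) (auto simp: words_def icr_def)
qed

lemma icr_pow_words:
  assumes "s \<in> words k n" "n \<ge> 1" "k \<ge> 1"
  shows "(icr k j ^^ m) s \<in> words k n"
  using assms by (induction m) (auto intro: icr_words)

lemma orbit_words:
  assumes "s \<in> words k n" "n \<ge> 1" "k \<ge> 1" "t \<in> orbit_icr k s"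
  shows "t \<in> words k n"
  using assms icr_pow_words unfolding orbit_icr_def by blast

lemma orbit_sym:
  assumes "s \<in> words k n" "n \<ge> 1" "k \<ge> 1" "t \<in> orbit_icr k s"
  shows "s \<in> orbit_icr k t"
proof -
  obtain m where t: "t = (icr k 1 ^^ m) s" using assms(4) unfolding orbit_icr_def by blast
  define N where "N = n * k"
  have N1: "N \<ge> 1" using assms N_def by simp
  have per: "\<And>i. (icr k 1 ^^ (N * i)) s = s"
  proof -
    fix i show "(icr k 1 ^^ (N * i)) s = s"
    proof (induction i)
      case 0 then show ?case by simp
    next
      case (Suc i)
      have "(icr k 1 ^^ (N * Suc i)) s = (icr k 1 ^^ N) ((icr k 1 ^^ (N * i)) s)"
        by (simp add: funpow_add)
      then show ?case using Suc icr_period[OF assms(1)] N_def by simp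
    qed
  qed
  have "N * m \<ge> m" using N1 by simp
  then have "(icr k 1 ^^ (N * m - m)) t = (icr k 1 ^^ (N*m)) s"
    by (simp add: t funpow_add[symmetric, THEN fun_cong, simplified])
  then have "(icr k 1 ^^ (N * m - m)) t = s" using per by simp
  then show ?thesis unfolding orbit_icr_def by blast
qed

lemma orbit_trans:
  assumes "t \<in> orbit_icr k s"
  shows "orbit_icr k t \<subseteq> orbit_icr k s"
proof
  fix u assume "u \<in> orbit_icr k t"
  then obtain a where u: "u = (icr k 1 ^^ a) t" unfolding orbit_icr_def by blast
  obtain b where t: "t = (icr k 1 ^^ b) s" using assms unfolding orbit_icr_def by blast
  have "u = (icr k 1 ^^ (a + b)) s" by (simp add: u t funpow_add)
  then show "u \<in> orbit_icr k s" unfolding orbit_icr_def by blast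
qed

lemma orbit_eq:
  assumes "w \<in> words k n" "n \<ge> 1" "k \<ge> 1" "t \<in> orbit_icr k w"
  shows "orbit_icr k t = orbit_icr k w"
  using orbit_trans[OF assms(4)] orbit_trans[OF orbit_sym[OF assms]] by blast

lemma depth_Suc:
  assumes "(par ^^ d) U = root" "U \<noteq> root"
  shows "depth root par U = Suc (depth root par (par U))"
proof -
  have "(LEAST d. (par ^^ d) U = root) = Suc (LEAST m. (par ^^ Suc m) U = root)"
    by (rule Least_Suc[of _ d]) (use assms in auto)
  moreover have "\<And>m. (par ^^ Suc m) U = (par ^^ m) (par U)"
    by (simp add: funpow_Suc_right del: funpow.simps)
  ultimately show ?thesis unfolding depth_def by simp
qed

lemma key:
  fixes k n :: nat and root :: "nat list set"
    and par :: "nat list set \<Rightarrow> nat list set" and rep :: "nat list set \<Rightarrow> nat list"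
  assumes k2: "k \<ge> 2" and n1: "n \<ge> 1"
    and st: "spanning_tree k n root par"
    and vr: "valid_reps k n root par rep"
    and s: "s \<in> words k n"
    and a: "icr k 0 s \<in> Reps k n root rep" and b: "icr k 1 s \<in> Reps k n root rep"
  shows "k = 2"
proof -
  have k1: "k \<ge> 1" using k2 by simp
  obtain U where U: "U \<in> cycles k n - {root}" "icr k 0 s = rep U"
    using a unfolding Reps_def by auto
  obtain V where V: "V \<in> cycles k n - {root}" "icr k 1 s = rep V"
    using b unfolding Reps_def by auto
  have sne: "s \<noteq> []" using s n1 by (auto simp: words_def)
  have hs: "hd s < k" using s sne by (cases s) (auto simp: words_def)
  have pU: "par U \<in> cycles k n" and dU: "\<exists>d. (par ^^ d) U = root"
    using st U(1) unfolding spanning_tree_def by auto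
  obtain t where t: "t \<in> par U" "icr k 0 t = rep U" and lU: "last (rep U) = depth root par U mod k"
    using vr U(1) unfolding valid_reps_def by blast
  have lV: "last (rep V) = depth root par V mod k" and rV: "rep V \<in> V"
    using vr V(1) unfolding valid_reps_def by blast+
  obtain w where w: "w \<in> words k n" "par U = orbit_icr k w" using pU unfolding cycles_def by auto
  have tw: "t \<in> words k n" using orbit_words[OF w(1) n1 k1] t(1) w(2) by simp
  have tne: "t \<noteq> []" using tw n1 by (auto simp: words_def)
  have ht: "hd t < k" using tw tne by (cases t) (auto simp: words_def)
  have ts: "t = s"
  proof -
    have "tl t @ [hd t] = tl s @ [hd s]" using t(2) U(2) ht hs by (simp add: icr_def)
    then have "tl t = tl s" "hd t = hd s" by auto
    then show ?thesis using tne sne by (metis list.collapse)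
  qed
  have sPU: "s \<in> par U" using t ts by simp
  obtain w' where w': "w' \<in> words k n" "V = orbit_icr k w'" using V(1) unfolding cycles_def by auto
  have bV: "icr k 1 s \<in> orbit_icr k w'" using rV V(2) w'(2) by simp
  have "V = orbit_icr k (icr k 1 s)" using orbit_eq[OF w'(1) n1 k1 bV] w'(2) by simp
  moreover have "icr k 1 s \<in> orbit_icr k s"
  proof -
    have "icr k 1 s = (icr k 1 ^^ 1) s" by simp
    then show ?thesis unfolding orbit_icr_def by blast
  qed
  moreover have "orbit_icr k s = par U"
    using orbit_eq[OF w(1) n1 k1] sPU w(2) by simp
  ultimately have VpU: "V = par U" using orbit_eq[OF s n1 k1] by simp
  obtain d where d: "(par ^^ d) U = root" using dU by blast
  have dep: "depth root par U = Suc (depth root par V)" using depth_Suc[OF d] U(1) VpU by simp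
  have e1: "hd s = Suc (depth root par V) mod k"
  proof -
    have "last (icr k 0 s) = hd s" using hs by (simp add: icr_def)
    then show ?thesis using lU U(2) dep by simp
  qed
  have e2: "(hd s + 1) mod k = depth root par V mod k"
  proof -
    have "last (icr k 1 s) = (hd s + 1) mod k" by (simp add: icr_def)
    then show ?thesis using lV V(2) by simp
  qed
  have "(depth root par V + 2) mod k = depth root par V mod k"
    using e1 e2 by (metis Suc_eq_plus1 add_2_eq_Suc' mod_Suc_eq)
  then have "k dvd 2"
    using mod_eq_dvd_iff_nat[of "depth root par V" "depth root par V + 2" k] by simp
  then show ?thesis using k2 dvd_imp_le[of k 2] by simp
qed

theorem lemma9:
  fixes k n :: nat and root :: "nat list set"
    and par :: "nat list set \<Rightarrow> nat list set" and rep :: "nat list set \<Rightarrow> nat list"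
  assumes "k \<ge> 2" and "n \<ge> 1"
    and "spanning_tree k n root par"
    and "valid_reps k n root par rep"
  shows "\<not> (\<exists>s \<in> words k n. icr k 0 s \<in> Reps k n root rep \<and> icr k 1 s \<in> Reps k n root rep
                            \<and> icr k 0 s \<noteq> icr k 2 s)
         \<and> (k > 2 \<longrightarrow> \<not> (\<exists>s \<in> words k n. icr k 0 s \<in> Reps k n root rep
                                       \<and> icr k 1 s \<in> Reps k n root rep))"
proof -
  have K: "\<And>s. s \<in> words k n \<Longrightarrow> icr k 0 s \<in> Reps k n root rep \<Longrightarrow> icr k 1 s \<in> Reps k n root rep \<Longrightarrow> k = 2"
    using key assms by blast
  have E: "icr 2 0 s = icr 2 2 s" for s by (simp add: icr_def)
  show ?thesis using K E by fastforce
qed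

end
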